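(* Let $G=(X\cup Y,E)$ be a connected convex bipartite graph with a lex-convex ordering $\sigma=(x_1,\ldots,x_{n_1},y_1,\ldots,y_{n_2})$, and let $(H_1,J_1,H_2,J_2,\ldots)$ be the chain decomposition of $G$ with respect to $\sigma$. Let $y_{r'}=right(x_1)$, $x_r=right(y_1)$, $y_s=right(x_r)$, and assume $s<n_2$; let $x_l=left(y_{s+1})$ and $x_p=right(y_{s+1})$. Then at least one of the following holds: (a) there exists a minimum vertex-edge dominating set $D$ of $G$ with $x_r\in D$; (b) there exists a minimum vertex-edge dominating set $D$ of $G$ with $y_\alpha\in D$, where $\alpha=\max\{i : 1\le i\le r' \text{ and } y_i \text{ is adjacent to every vertex of } J_1\}$ (in particular this set of indices is nonempty, and $y_\alpha\in N_G(x_1)$).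
   Context: All graphs are finite, simple and undirected. $N_G(v)$ is the open neighbourhood and $N_G[v]=N_G(v)\cup\{v\}$. An edge $uv$ is ve-dominated by a vertex $w$ if $w\in N_G[u]\cup N_G[v]$. A vertex-edge dominating set (VED-set) of $G$ is a set $D\subseteq V(G)$ such that every edge $uv$ satisfies $|(N_G[u]\cup N_G[v])\cap D|\ge 1$; $\gamma_{ve}(G)$ is the minimum size of a VED-set, and a minimum VED-set is one of that size. A bipartite graph $G=(X\cup Y,E)$ is convex (with respect to $Y$) if $Y$ can be ordered $y_1,\dots,y_{n_2}$ so that for every $x\in X$, $N_G(x)$ is a set of consecutive vertices in this order. Given an ordering $\sigma=(x_1,\dots,x_{n_1},y_1,\dots,y_{n_2})$, for a vertex $v$, $left(v)$ and $right(v)$ denote the neighbours of $v$ of minimum and maximum index in $\sigma$ respectively; for $x_i,x_j$, $left(x_i)\prec left(x_j)$ (resp. $\preceq$) means the index of $left(x_i)$ is less than (resp. at most) that of $left(x_j)$, and similarly for $right$. $\sigma$ is lex-convex if the order on $Y$ is a convex ordering and for all $i<j$ either $left(x_i)\prec left(x_j)$, or $left(x_i)=left(x_j)$ and $right(x_i)\preceq right(x_j)$. A bipartite graph is a chain graph if the neighbourhoods on each side are totally ordered by inclusion. The chain decomposition of a connected convex bipartite graph $G$ with lex-convex ordering $\sigma$: let $x_{t_1}=right(y_1)$ and let $H_1$ be the (chain) subgraph induced by $N(y_1)\cup N(x_{t_1})$; remove $H_1$ from $G$; let $J_1$ be the set of vertices of $X$ that are isolated in $G-V(H_1)$; remove $J_1$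 as well; repeat on the remaining graph (with the inherited ordering) to obtain $H_2,J_2,\dots$, until what remains is a chain graph or a set of isolated vertices. Isolated vertices are not considered part of any $H_i$. Notation: $X_i=\{x_i,\dots,x_{n_1}\}$, $Y_i=\{y_i,\dots,y_{n_2}\}$. *)

theory Defs
  imports Main
begin

definition open_nbhd :: "'a set \<Rightarrow> ('a \<Rightarrow> 'a \<Rightarrow> bool) \<Rightarrow> 'a \<Rightarrow> 'a set" where
  "open_nbhd V E v = {u \<in> V. E v u}"

definition closed_nbhd :: "'a set \<Rightarrow> ('a \<Rightarrow> 'a \<Rightarrow> bool) \<Rightarrow> 'a \<Rightarrow> 'a set" where
  "closed_nbhd V E v = insert v (open_nbhd V E v)"

definition is_ved :: "'a set \<Rightarrow> ('a \<Rightarrow> 'a \<Rightarrow> bool) \<Rightarrow> 'a set \<Rightarrow> bool" where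
  "is_ved V E D \<longleftrightarrow> D \<subseteq> V \<and>
     (\<forall>u\<in>V. \<forall>v\<in>V. E u v \<longrightarrow> (closed_nbhd V E u \<union> closed_nbhd V E v) \<inter> D \<noteq> {})"

definition is_min_ved :: "'a set \<Rightarrow> ('a \<Rightarrow> 'a \<Rightarrow> bool) \<Rightarrow> 'a set \<Rightarrow> bool" where
  "is_min_ved V E D \<longleftrightarrow> is_ved V E D \<and> (\<forall>D'. is_ved V E D' \<longrightarrow> card D \<le> card D')"

definition graph_connected :: "'a set \<Rightarrow> ('a \<Rightarrow> 'a \<Rightarrow> bool) \<Rightarrow> bool" where
  "graph_connected V E \<longleftrightarrow>
     (\<forall>u\<in>V. \<forall>v\<in>V. (\<lambda>a b. a \<in> V \<and> b \<in> V \<and> E a b)\<^sup>*\<^sup>* u v)"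

text \<open>A bipartite graph with ordered sides: x_i is Inl i (1 \<le> i \<le> n1), y_j is Inr j (1 \<le> j \<le> n2);
  the ordering sigma = (x_1..x_n1, y_1..y_n2) is the index ordering. adj i j means x_i y_j is an edge.\<close>

definition bV :: "nat \<Rightarrow> nat \<Rightarrow> (nat + nat) set" where
  "bV n1 n2 = Inl ` {1..n1} \<union> Inr ` {1..n2}"

fun bE :: "(nat \<Rightarrow> nat \<Rightarrow> bool) \<Rightarrow> nat + nat \<Rightarrow> nat + nat \<Rightarrow> bool" where
  "bE adj (Inl i) (Inr j) = adj i j"
| "bE adj (Inr j) (Inl i) = adj i j"
| "bE adj _ _ = False"

definition xnbr :: "(nat \<Rightarrow> nat \<Rightarrow> bool) \<Rightarrow> nat \<Rightarrow> nat \<Rightarrow> nat set" where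
  "xnbr adj n2 i = {j \<in> {1..n2}. adj i j}"

definition ynbr :: "(nat \<Rightarrow> nat \<Rightarrow> bool) \<Rightarrow> nat \<Rightarrow> nat \<Rightarrow> nat set" where
  "ynbr adj n1 j = {i \<in> {1..n1}. adj i j}"

definition left_x :: "(nat \<Rightarrow> nat \<Rightarrow> bool) \<Rightarrow> nat \<Rightarrow> nat \<Rightarrow> nat" where
  "left_x adj n2 i = Min (xnbr adj n2 i)"

definition right_x :: "(nat \<Rightarrow> nat \<Rightarrow> bool) \<Rightarrow> nat \<Rightarrow> nat \<Rightarrow> nat" where
  "right_x adj n2 i = Max (xnbr adj n2 i)"

definition left_y :: "(nat \<Rightarrow> nat \<Rightarrow> bool) \<Rightarrow> nat \<Rightarrow> nat \<Rightarrow> nat" where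
  "left_y adj n1 j = Min (ynbr adj n1 j)"

definition right_y :: "(nat \<Rightarrow> nat \<Rightarrow> bool) \<Rightarrow> nat \<Rightarrow> nat \<Rightarrow> nat" where
  "right_y adj n1 j = Max (ynbr adj n1 j)"

definition convex_Y :: "nat \<Rightarrow> nat \<Rightarrow> (nat \<Rightarrow> nat \<Rightarrow> bool) \<Rightarrow> bool" where
  "convex_Y n1 n2 adj \<longleftrightarrow>
     (\<forall>i\<in>{1..n1}. \<forall>j1 j2 j. j1 \<in> xnbr adj n2 i \<and> j2 \<in> xnbr adj n2 i \<and> j1 \<le> j \<and> j \<le> j2
        \<longrightarrow> j \<in> xnbr adj n2 i)"

definition lex_convex :: "nat \<Rightarrow> nat \<Rightarrow> (nat \<Rightarrow> nat \<Rightarrow> bool) \<Rightarrow> bool" where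
  "lex_convex n1 n2 adj \<longleftrightarrow> convex_Y n1 n2 adj \<and>
     (\<forall>i j. 1 \<le> i \<and> i < j \<and> j \<le> n1 \<longrightarrow>
        left_x adj n2 i < left_x adj n2 j \<or>
        (left_x adj n2 i = left_x adj n2 j \<and> right_x adj n2 i \<le> right_x adj n2 j))"

definition chain_H1_vertices :: "nat \<Rightarrow> nat \<Rightarrow> (nat \<Rightarrow> nat \<Rightarrow> bool) \<Rightarrow> (nat + nat) set" where
  "chain_H1_vertices n1 n2 adj =
     open_nbhd (bV n1 n2) (bE adj) (Inr 1) \<union>
     open_nbhd (bV n1 n2) (bE adj) (Inl (right_y adj n1 1))"

definition chain_J1 :: "nat \<Rightarrow> nat \<Rightarrow> (nat \<Rightarrow> nat \<Rightarrow> bool) \<Rightarrow> nat set" where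
  "chain_J1 n1 n2 adj =
     {i \<in> {1..n1}. Inl i \<notin> chain_H1_vertices n1 n2 adj \<and>
        (\<forall>w \<in> bV n1 n2 - chain_H1_vertices n1 n2 adj. \<not> bE adj (Inl i) w)}"

end

theory Submission
  imports Defs
begin

definition domi :: "(nat \<Rightarrow> nat \<Rightarrow> bool) \<Rightarrow> nat \<Rightarrow> nat \<Rightarrow> nat + nat \<Rightarrow> bool" where
  "domi adj i c w \<longleftrightarrow> w = Inl i \<or> w = Inr c \<or> (\<exists>c'. w = Inr c' \<and> adj i c') \<or> (\<exists>i'. w = Inl i' \<and> adj i' c)"

lemma ved_char:
  assumes edges: "\<And>i j. adj i j \<Longrightarrow> 1 \<le> i \<and> i \<le> n1 \<and> 1 \<le> j \<and> j \<le> n2"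
  shows "is_ved (bV n1 n2) (bE adj) D \<longleftrightarrow> D \<subseteq> bV n1 n2 \<and> (\<forall>i c. adj i c \<longrightarrow> (\<exists>w\<in>D. domi adj i c w))"
proof
  assume H: "is_ved (bV n1 n2) (bE adj) D"
  show "D \<subseteq> bV n1 n2 \<and> (\<forall>i c. adj i c \<longrightarrow> (\<exists>w\<in>D. domi adj i c w))"
  proof (intro conjI allI impI)
    show "D \<subseteq> bV n1 n2" using H unfolding is_ved_def by blast
    fix i c assume a: "adj i c"
    have iV: "Inl i \<in> bV n1 n2" and cV: "Inr c \<in> bV n1 n2" using edges[OF a] unfolding bV_def by auto
    have "(closed_nbhd (bV n1 n2) (bE adj) (Inl i) \<union> closed_nbhd (bV n1 n2) (bE adj) (Inr c)) \<inter> D \<noteq> {}"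
      using H iV cV a unfolding is_ved_def by auto
    then obtain w where w: "w \<in> D" "w \<in> closed_nbhd (bV n1 n2) (bE adj) (Inl i) \<union> closed_nbhd (bV n1 n2) (bE adj) (Inr c)" by blast
    then show "\<exists>w\<in>D. domi adj i c w"
      by (cases w) (auto simp: closed_nbhd_def open_nbhd_def domi_def)
  qed
next
  assume H: "D \<subseteq> bV n1 n2 \<and> (\<forall>i c. adj i c \<longrightarrow> (\<exists>w\<in>D. domi adj i c w))"
  show "is_ved (bV n1 n2) (bE adj) D"
    unfolding is_ved_def
  proof (intro conjI ballI impI)
    show "D \<subseteq> bV n1 n2" using H by blast
    fix u v assume uV: "u \<in> bV n1 n2" and vV: "v \<in> bV n1 n2" and e: "bE adj u v"
    show "(closed_nbhd (bV n1 n2) (bE adj) u \<union> closed_nbhd (bV n1 n2) (bE adj) v) \<inter> D \<noteq> {}"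
    proof (cases u)
      case (Inl i)
      then obtain c where vc: "v = Inr c" using e by (cases v) auto
      with Inl e have a: "adj i c" by simp
      then obtain w where w: "w \<in> D" "domi adj i c w" using H by blast
      have "w \<in> bV n1 n2" using w H by blast
      then show ?thesis using w Inl vc by (auto simp: closed_nbhd_def open_nbhd_def domi_def)
    next
      case (Inr c)
      then obtain i where vi: "v = Inl i" using e by (cases v) auto
      with Inr e have a: "adj i c" by simp
      then obtain w where w: "w \<in> D" "domi adj i c w" using H by blast
      have "w \<in> bV n1 n2" using w H by blast
      then show ?thesis using w Inr vi by (auto simp: closed_nbhd_def open_nbhd_def domi_def)
    qed
  qed
qed

lemma conv:
  assumes edges: "\<And>i j. adj i j \<Longrightarrow> 1 \<le> i \<and> i \<le> n1 \<and> 1 \<le> j \<and> j \<le> n2"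
    and lex: "lex_convex n1 n2 adj"
    and "adj i a" "adj i b" "a \<le> c" "c \<le> b"
  shows "adj i c"
proof -
  have "i \<in> {1..n1}" using edges[OF assms(3)] by auto
  moreover have "a \<in> xnbr adj n2 i" "b \<in> xnbr adj n2 i"
    using assms(3,4) edges[OF assms(3)] edges[OF assms(4)] by (auto simp: xnbr_def)
  ultimately have "c \<in> xnbr adj n2 i" using lex assms(5,6) unfolding lex_convex_def convex_Y_def by blast
  then show ?thesis by (simp add: xnbr_def)
qed

lemma lr:
  assumes edges: "\<And>i j. adj i j \<Longrightarrow> 1 \<le> i \<and> i \<le> n1 \<and> 1 \<le> j \<and> j \<le> n2"
    and a: "adj i c"
  shows "left_x adj n2 i \<le> c \<and> c \<le> right_x adj n2 i \<and> adj i (left_x adj n2 i) \<and> adj i (right_x adj n2 i)"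
proof -
  have f: "finite (xnbr adj n2 i)" by (simp add: xnbr_def)
  have m: "c \<in> xnbr adj n2 i" using a edges[OF a] by (simp add: xnbr_def)
  have "Min (xnbr adj n2 i) \<in> xnbr adj n2 i" "Max (xnbr adj n2 i) \<in> xnbr adj n2 i"
    using f m by (auto intro: Min_in Max_in)
  then show ?thesis using f m unfolding left_x_def right_x_def by (auto simp: xnbr_def)
qed

lemma ry:
  assumes edges: "\<And>i j. adj i j \<Longrightarrow> 1 \<le> i \<and> i \<le> n1 \<and> 1 \<le> j \<and> j \<le> n2"
    and a: "adj i c"
  shows "i \<le> right_y adj n1 c \<and> adj (right_y adj n1 c) c"
proof -
  have f: "finite (ynbr adj n1 c)" by (simp add: ynbr_def)
  have m: "i \<in> ynbr adj n1 c" using a edges[OF a] by (simp add: ynbr_def)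
  have "Max (ynbr adj n1 c) \<in> ynbr adj n1 c"
    using f m by (auto intro: Max_in)
  then show ?thesis using f m unfolding right_y_def by (auto simp: ynbr_def)
qed

lemma nbr_x:
  assumes conn: "graph_connected (bV n1 n2) (bE adj)" and n2: "1 \<le> n2" and i: "1 \<le> i" "i \<le> n1"
  shows "\<exists>c. adj i c"
proof -
  have "(\<lambda>a b. a \<in> bV n1 n2 \<and> b \<in> bV n1 n2 \<and> bE adj a b)\<^sup>*\<^sup>* (Inl i) (Inr 1)"
    using conn n2 i unfolding graph_connected_def bV_def by auto
  then show ?thesis
  proof (cases rule: converse_rtranclpE)
    case base then show ?thesis by simp
  next
    case (step y)
    then show ?thesis by (cases y) auto
  qed
qed

lemma nbr_y:
  assumes conn: "graph_connected (bV n1 n2) (bE adj)" and n1: "1 \<le> n1" and c: "1 \<le> c" "c \<le> n2"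
  shows "\<exists>i. adj i c"
proof -
  have "(\<lambda>a b. a \<in> bV n1 n2 \<and> b \<in> bV n1 n2 \<and> bE adj a b)\<^sup>*\<^sup>* (Inr c) (Inl 1)"
    using conn n1 c unfolding graph_connected_def bV_def by auto
  then show ?thesis
  proof (cases rule: converse_rtranclpE)
    case base then show ?thesis by simp
  next
    case (step y)
    then show ?thesis by (cases y) auto
  qed
qed

lemma card_swap1:
  assumes "finite D" "w \<in> D" shows "card (insert x (D - {w})) \<le> card D"
proof -
  have p: "card D > 0" using assms card_gt_0_iff by blast
  have "card (insert x (D - {w})) \<le> Suc (card (D - {w}))" using assms by (simp add: card_insert_if)
  also have "\<dots> = card D" using assms p by (simp add: card_Diff_singleton)
  finally show ?thesis .
qed

lemma card_swap2:
  assumes "finite D" "w1 \<in> D" "w2 \<in> D" "w1 \<noteq> w2"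
  shows "card (insert x (insert y (D - {w1, w2}))) \<le> card D"
proof -
  have c2: "card {w1, w2} = 2" using assms(4) by simp
  have "card {w1, w2} \<le> card D" using assms by (intro card_mono) auto
  then have ge: "card D \<ge> 2" using c2 by simp
  have c: "card (D - {w1,w2}) = card D - 2" using card_Diff_subset[of "{w1,w2}" D] assms c2 by auto
  have "card (insert x (insert y (D - {w1, w2}))) \<le> Suc (Suc (card (D - {w1, w2})))"
    using assms by (simp add: card_insert_if)
  also have "\<dots> = card D" using c ge by simp
  finally show ?thesis .
qed


theorem lemma1:
  fixes n1 n2 :: nat and adj :: "nat \<Rightarrow> nat \<Rightarrow> bool"
  assumes n1: "1 \<le> n1" and n2: "1 \<le> n2"
    and edges: "\<And>i j. adj i j \<Longrightarrow> 1 \<le> i \<and> i \<le> n1 \<and> 1 \<le> j \<and> j \<le> n2"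
    and conn: "graph_connected (bV n1 n2) (bE adj)"
    and lex: "lex_convex n1 n2 adj"
    and s_lt: "right_x adj n2 (right_y adj n1 1) < n2"
  shows "(\<exists>D. is_min_ved (bV n1 n2) (bE adj) D \<and> Inl (right_y adj n1 1) \<in> D) \<or>
         (let A = {i. 1 \<le> i \<and> i \<le> right_x adj n2 1 \<and> (\<forall>k \<in> chain_J1 n1 n2 adj. adj k i)}
          in A \<noteq> {} \<and> adj 1 (Max A) \<and>
             (\<exists>D. is_min_ved (bV n1 n2) (bE adj) D \<and> Inr (Max A) \<in> D))"
proof -
  let ?V = "bV n1 n2"
  let ?r = "right_y adj n1 1"
  let ?s = "right_x adj n2 ?r"
  let ?rp = "right_x adj n2 1"
  let ?A = "{i. 1 \<le> i \<and> i \<le> ?rp \<and> (\<forall>k \<in> chain_J1 n1 n2 adj. adj k i)}"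
  have ved: "\<And>D. is_ved ?V (bE adj) D \<longleftrightarrow> D \<subseteq> ?V \<and> (\<forall>i c. adj i c \<longrightarrow> (\<exists>w\<in>D. domi adj i c w))"
    using ved_char[OF edges] by blast
  have cv: "\<And>i a b c. adj i a \<Longrightarrow> adj i b \<Longrightarrow> a \<le> c \<Longrightarrow> c \<le> b \<Longrightarrow> adj i c"
    using conv[OF edges lex] by blast
  have LR: "\<And>i c. adj i c \<Longrightarrow> left_x adj n2 i \<le> c \<and> c \<le> right_x adj n2 i \<and> adj i (left_x adj n2 i) \<and> adj i (right_x adj n2 i)"
    using lr[OF edges] by blast
  have lexr: "\<And>i j. 1 \<le> i \<Longrightarrow> i < j \<Longrightarrow> j \<le> n1 \<Longrightarrow> left_x adj n2 i < left_x adj n2 j \<or>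
        (left_x adj n2 i = left_x adj n2 j \<and> right_x adj n2 i \<le> right_x adj n2 j)"
    using lex unfolding lex_convex_def by blast
  obtain i0 where "adj i0 1" using nbr_y[OF conn n1] n2 by auto
  then have r1: "adj ?r 1" using ry[OF edges] by blast
  have rmax: "\<And>i. adj i 1 \<Longrightarrow> i \<le> ?r" using ry[OF edges] by blast
  have lx1: "\<And>i. adj i 1 \<Longrightarrow> left_x adj n2 i = 1"
  proof -
    fix i assume "adj i 1"
    then have "left_x adj n2 i \<le> 1" "adj i (left_x adj n2 i)" using LR by blast+
    then show "left_x adj n2 i = 1" using edges by force
  qed
  have lxge: "\<And>i c. adj i c \<Longrightarrow> 1 \<le> left_x adj n2 i" using LR edges by blast
  have rr: "1 \<le> ?r" "?r \<le> n1" using edges[OF r1] by auto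
  have rs: "adj ?r ?s" using LR[OF r1] by blast
  have s1: "1 \<le> ?s" using edges[OF rs] by blast
  have adjr: "\<And>c. 1 \<le> c \<Longrightarrow> c \<le> ?s \<Longrightarrow> adj ?r c" using cv[OF r1 rs] by blast
  have adj11: "adj 1 1"
  proof (cases "?r = 1")
    case True then show ?thesis using r1 by simp
  next
    case False
    then have "1 < ?r" using rr by simp
    obtain c where c: "adj 1 c" using nbr_x[OF conn n2] n1 by blast
    have "left_x adj n2 1 < left_x adj n2 ?r \<or> left_x adj n2 1 = left_x adj n2 ?r"
      using lexr[OF _ \<open>1 < ?r\<close> rr(2)] by auto
    then have "left_x adj n2 1 \<le> 1" using lx1[OF r1] by auto
    then have "left_x adj n2 1 = 1" using lxge[OF c] by simp
    then show ?thesis using LR[OF c] by metis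
  qed
  have R1: "\<And>i. adj i 1 \<Longrightarrow> ?rp \<le> right_x adj n2 i \<and> right_x adj n2 i \<le> ?s"
  proof -
    fix i assume a: "adj i 1"
    have i1: "1 \<le> i" "i \<le> ?r" using edges[OF a] rmax[OF a] by auto
    have "?rp \<le> right_x adj n2 i"
    proof (cases "i = 1")
      case False
      then have "1 < i" using i1 by simp
      then show ?thesis using lexr[of 1 i] lx1[OF a] lx1[OF adj11] i1 rr by auto
    qed simp
    moreover have "right_x adj n2 i \<le> ?s"
    proof (cases "i = ?r")
      case False
      then have "i < ?r" using i1 by simp
      then show ?thesis using lexr[of i ?r] lx1[OF a] lx1[OF r1] i1 rr by auto
    qed simp
    ultimately show "?rp \<le> right_x adj n2 i \<and> right_x adj n2 i \<le> ?s" by blast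
  qed
  have rps: "?rp \<le> ?s" using R1[OF adj11] by blast
  have rp1: "adj 1 ?rp" using LR[OF adj11] by blast
  have finV: "finite ?V" by (simp add: bV_def)
  have Vved: "is_ved ?V (bE adj) ?V"
    unfolding ved
  proof (intro conjI allI impI)
    fix i c assume "adj i c"
    then have "Inl i \<in> ?V" using edges unfolding bV_def by auto
    then show "\<exists>w\<in>?V. domi adj i c w" unfolding domi_def by blast
  qed simp
  obtain D where Dv: "is_ved ?V (bE adj) D" and Dmin: "\<And>D'. is_ved ?V (bE adj) D' \<Longrightarrow> card D \<le> card D'"
    using ex_has_least_nat[of "is_ved ?V (bE adj)" ?V card] Vved by blast
  have DV: "D \<subseteq> ?V" and Ddom: "\<And>i c. adj i c \<Longrightarrow> \<exists>w\<in>D. domi adj i c w" using Dv ved by blast+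
  have finD: "finite D" using DV finV finite_subset by blast
  have minI: "\<And>D'. is_ved ?V (bE adj) D' \<Longrightarrow> card D' \<le> card D \<Longrightarrow> is_min_ved ?V (bE adj) D'"
    using Dmin unfolding is_min_ved_def by (meson le_trans)
  show ?thesis
  proof (cases "\<exists>i. Inl i \<in> D \<and> right_x adj n2 i \<le> ?s")
    case True
    then obtain i where i: "Inl i \<in> D" "right_x adj n2 i \<le> ?s" by blast
    let ?D' = "insert (Inl ?r) (D - {Inl i})"
    have "is_ved ?V (bE adj) ?D'"
      unfolding ved
    proof (intro conjI allI impI)
      show "?D' \<subseteq> ?V" using DV rr by (auto simp: bV_def)
      fix i1 c assume a: "adj i1 c"
      obtain w where w: "w \<in> D" "domi adj i1 c w" using Ddom a by blast
      show "\<exists>w\<in>?D'. domi adj i1 c w"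
      proof (cases "w = Inl i")
        case False thus ?thesis using w by blast
      next
        case True
        then have ic: "adj i c" using w(2) a by (auto simp: domi_def)
        then have "c \<le> ?s" "1 \<le> c" using LR[OF ic] i(2) edges[OF ic] by auto
        then have "adj ?r c" using adjr by blast
        then show ?thesis by (auto simp: domi_def)
      qed
    qed
    moreover have "card ?D' \<le> card D" using card_swap1 finD i(1) .
    ultimately show ?thesis using minI by blast
  next
    case False
    then have noX: "\<And>i. Inl i \<in> D \<Longrightarrow> ?s < right_x adj n2 i" by force
    define inS where "inS w \<longleftrightarrow> (\<exists>j'. w = Inr j' \<and> j' \<le> ?s+1) \<or> (\<exists>a. w = Inl a \<and> adj a (?s+1))" for w
    show ?thesis
    proof (cases "\<exists>w1\<in>D. \<exists>w2\<in>D. w1 \<noteq> w2 \<and> inS w1 \<and> inS w2")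
      case True
      then obtain w1 w2 where w12: "w1 \<in> D" "w2 \<in> D" "w1 \<noteq> w2" "inS w1" "inS w2" by blast
      obtain i1 where i1: "adj i1 (?s+1)" using nbr_y[OF conn n1, of "?s+1"] s_lt by auto
      have fy: "finite (right_x adj n2 ` ynbr adj n1 (?s+1))" by (simp add: ynbr_def)
      have ny: "i1 \<in> ynbr adj n1 (?s+1)" using i1 edges[OF i1] by (simp add: ynbr_def)
      have ne: "right_x adj n2 ` ynbr adj n1 (?s+1) \<noteq> {}" using ny by blast
      obtain b where b: "b \<in> ynbr adj n1 (?s+1)" "right_x adj n2 b = Max (right_x adj n2 ` ynbr adj n1 (?s+1))"
        using Max_in[OF fy ne] by (metis imageE)
      have bs: "adj b (?s+1)" using b(1) by (simp add: ynbr_def)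
      have bmax: "\<And>i. adj i (?s+1) \<Longrightarrow> right_x adj n2 i \<le> right_x adj n2 b"
      proof -
        fix i assume "adj i (?s+1)"
        then have "i \<in> ynbr adj n1 (?s+1)" using edges by (simp add: ynbr_def)
        then show "right_x adj n2 i \<le> right_x adj n2 b" unfolding b(2) using fy by (intro Max_ge) auto
      qed
      have adjb: "\<And>c. ?s+1 \<le> c \<Longrightarrow> c \<le> right_x adj n2 b \<Longrightarrow> adj b c"
        using cv[OF bs] LR[OF bs] by blast
      have key: "\<And>w i c. inS w \<Longrightarrow> domi adj i c w \<Longrightarrow> adj i c \<Longrightarrow> ?s < c \<Longrightarrow> adj b c"
      proof -
        fix w i c assume iw: "inS w" and dw: "domi adj i c w" and a: "adj i c" and sc: "?s < c"
        have "c \<le> right_x adj n2 b"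
        proof (cases "\<exists>j'. w = Inr j' \<and> j' \<le> ?s+1")
          case True
          then obtain j' where j': "w = Inr j'" "j' \<le> ?s+1" by blast
          then have "c = j' \<or> adj i j'" using dw by (auto simp: domi_def)
          then show ?thesis
          proof
            assume "c = j'"
            then have "c = ?s+1" using j' sc by simp
            then show ?thesis using LR[OF bs] by simp
          next
            assume "adj i j'"
            moreover have "j' \<le> ?s+1" "?s+1 \<le> c" using j' sc by simp_all
            ultimately have "adj i (?s+1)" using cv[OF _ a] by blast
            then show ?thesis using bmax LR[OF a] by (meson le_trans)
          qed
        next
          case False
          then obtain a' where a': "w = Inl a'" "adj a' (?s+1)" using iw unfolding inS_def by blast
          then have "adj a' c" using dw a by (auto simp: domi_def)
          then show ?thesis using bmax[OF a'(2)] LR by (meson le_trans)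
        qed
        then show "adj b c" using adjb sc by simp
      qed
      let ?D' = "insert (Inl ?r) (insert (Inl b) (D - {w1, w2}))"
      have "is_ved ?V (bE adj) ?D'"
        unfolding ved
      proof (intro conjI allI impI)
        have "Inl b \<in> ?V" "Inl ?r \<in> ?V" using b(1) rr by (auto simp: bV_def ynbr_def)
        then show "?D' \<subseteq> ?V" using DV by blast
        fix i c assume a: "adj i c"
        obtain w where w: "w \<in> D" "domi adj i c w" using Ddom a by blast
        show "\<exists>w\<in>?D'. domi adj i c w"
        proof (cases "w \<in> {w1, w2}")
          case False thus ?thesis using w by blast
        next
          case True
          then have iw: "inS w" using w12 by blast
          show ?thesis
          proof (cases "c \<le> ?s")
            case True
            then have "adj ?r c" using adjr edges[OF a] by blast
            then show ?thesis by (auto simp: domi_def)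
          next
            case False
            then have "adj b c" using key[OF iw w(2) a] by simp
            then show ?thesis by (auto simp: domi_def)
          qed
        qed
      qed
      moreover have "card ?D' \<le> card D" using card_swap2 finD w12(1-3) .
      ultimately show ?thesis using minI by blast
    next
      case False
      then have uniq: "\<And>w1 w2. w1 \<in> D \<Longrightarrow> w2 \<in> D \<Longrightarrow> inS w1 \<Longrightarrow> inS w2 \<Longrightarrow> w1 = w2" by blast
      obtain w where w: "w \<in> D" "domi adj 1 1 w" using Ddom adj11 by blast
      have "\<exists>j. w = Inr j \<and> 1 \<le> j \<and> j \<le> ?rp"
      proof (cases w)
        case (Inl i')
        then have "adj i' 1" using w(2) adj11 by (auto simp: domi_def)
        then have "right_x adj n2 i' \<le> ?s" using R1 by blast
        then show ?thesis using noX w(1) Inl by force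
      next
        case (Inr c')
        then have "c' = 1 \<or> adj 1 c'" using w(2) by (auto simp: domi_def)
        then have "c' \<le> ?rp"
        proof
          assume "adj 1 c'" then show ?thesis using LR by blast
        next
          assume "c' = 1" then show ?thesis using edges[OF rp1] by simp
        qed
        moreover have "1 \<le> c'" using DV w(1) Inr by (auto simp: bV_def)
        ultimately show ?thesis using Inr by blast
      qed
      then obtain j where j: "Inr j \<in> D" "1 \<le> j" "j \<le> ?rp" using w(1) by blast
      have inSj: "inS (Inr j)" using j rps unfolding inS_def by simp
      have noXadj: "\<And>m c. Inl m \<in> D \<Longrightarrow> adj m c \<Longrightarrow> c \<le> ?s \<Longrightarrow> False"
      proof -
        fix m c assume m: "Inl m \<in> D" "adj m c" "c \<le> ?s"
        have "?s < right_x adj n2 m" using noX m(1) by blast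
        moreover have "adj m (right_x adj n2 m)" using LR[OF m(2)] by blast
        moreover have "c \<le> ?s+1" using m(3) by simp
        ultimately have "adj m (?s+1)" using cv[OF m(2)] by simp
        then have "inS (Inl m)" unfolding inS_def by blast
        then show False using uniq[OF m(1) j(1) _ inSj] by simp
      qed
      have J1adj: "\<And>k. k \<in> chain_J1 n1 n2 adj \<Longrightarrow> adj k j"
      proof -
        fix k assume k: "k \<in> chain_J1 n1 n2 adj"
        then have k1: "1 \<le> k" "k \<le> n1"
          and hk: "\<forall>w \<in> ?V - chain_H1_vertices n1 n2 adj. \<not> bE adj (Inl k) w"
          unfolding chain_J1_def by auto
        have kn: "\<And>c. adj k c \<Longrightarrow> c \<le> ?s"
        proof -
          fix c assume a: "adj k c"
          then have "Inr c \<in> ?V" using edges[OF a] by (auto simp: bV_def)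
          then have "Inr c \<in> chain_H1_vertices n1 n2 adj" using hk a bE.simps(1) by (metis DiffI)
          then have "adj ?r c" unfolding chain_H1_vertices_def open_nbhd_def by auto
          then show "c \<le> ?s" using LR by blast
        qed
        obtain c where c: "adj k c" using nbr_x[OF conn n2 k1] by blast
        obtain w where w: "w \<in> D" "domi adj k c w" using Ddom c by blast
        show "adj k j"
        proof (cases w)
          case (Inl i')
          then have "i' = k \<or> adj i' c" using w(2) by (auto simp: domi_def)
          then show ?thesis
          proof
            assume "i' = k"
            then have "?s < right_x adj n2 k" using noX w(1) Inl by blast
            moreover have "right_x adj n2 k \<le> ?s" using kn LR[OF c] by blast
            ultimately show ?thesis by simp
          next
            assume "adj i' c"
            then show ?thesis using noXadj w(1) Inl kn[OF c] by blast
          qed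
        next
          case (Inr c')
          then have cc: "c' = c \<or> adj k c'" using w(2) by (auto simp: domi_def)
          then have "c' \<le> ?s" using kn c by blast
          then have "inS w" using Inr unfolding inS_def by simp
          then have "c' = j" using uniq[OF w(1) j(1) _ inSj] Inr by simp
          then show ?thesis using cc c by blast
        qed
      qed
      have jA: "j \<in> ?A" using j J1adj by blast
      have finA: "finite ?A" by (rule finite_subset[of _ "{..?rp}"]) auto
      let ?al = "Max ?A"
      have alA: "?al \<in> ?A" using Max_in[OF finA] jA by blast
      have jal: "j \<le> ?al" using Max_ge[OF finA jA] .
      have al1: "1 \<le> ?al" "?al \<le> ?rp" using alA by auto
      have adj1al: "adj 1 ?al" using cv[OF adj11 rp1 al1] .
      let ?D' = "insert (Inr ?al) (D - {Inr j})"
      have "is_ved ?V (bE adj) ?D'"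
        unfolding ved
      proof (intro conjI allI impI)
        show "?D' \<subseteq> ?V" using DV al1 rps s_lt by (auto simp: bV_def)
        fix i c assume a: "adj i c"
        obtain w where w: "w \<in> D" "domi adj i c w" using Ddom a by blast
        show "\<exists>w\<in>?D'. domi adj i c w"
        proof (cases "w = Inr j")
          case False thus ?thesis using w by blast
        next
          case True
          then have ij: "adj i j" using w(2) a by (auto simp: domi_def)
          have "adj i ?al"
          proof (cases "?s < right_x adj n2 i")
            case True
            have "adj i (right_x adj n2 i)" using LR[OF ij] by blast
            moreover have "?al \<le> right_x adj n2 i" using True al1 rps by linarith
            ultimately show ?thesis using cv[OF ij _ jal] by blast
          next
            case False
            then have ris: "right_x adj n2 i \<le> ?s" by simp
            show ?thesis
            proof (cases "adj i 1")
              case True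
              have "adj i (right_x adj n2 i)" using LR[OF ij] by blast
              moreover have "?al \<le> right_x adj n2 i" using R1[OF True] al1 by linarith
              ultimately show ?thesis using cv[OF True _ al1(1)] by blast
            next
              case False
              have "i \<in> chain_J1 n1 n2 adj"
                unfolding chain_J1_def
              proof (intro CollectI conjI ballI)
                show "i \<in> {1..n1}" using edges[OF a] by auto
                show "Inl i \<notin> chain_H1_vertices n1 n2 adj"
                  using False unfolding chain_H1_vertices_def open_nbhd_def by auto
                fix w' assume w': "w' \<in> ?V - chain_H1_vertices n1 n2 adj"
                show "\<not> bE adj (Inl i) w'"
                proof (cases w')
                  case (Inr c'')
                  show ?thesis
                  proof
                    assume "bE adj (Inl i) w'"
                    then have ac: "adj i c''" using Inr by simp
                    then have "c'' \<le> ?s" "1 \<le> c''" using LR[OF ac] ris edges[OF ac] by auto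
                    then have "adj ?r c''" using adjr by blast
                    then have "w' \<in> chain_H1_vertices n1 n2 adj"
                      using w' Inr unfolding chain_H1_vertices_def open_nbhd_def by auto
                    then show False using w' by blast
                  qed
                qed simp
              qed
              then show ?thesis using alA by blast
            qed
          qed
          then show ?thesis by (auto simp: domi_def)
        qed
      qed
      moreover have "card ?D' \<le> card D" using card_swap1 finD j(1) .
      ultimately have "is_min_ved ?V (bE adj) ?D'" using minI by blast
      then have "?A \<noteq> {} \<and> adj 1 (Max ?A) \<and> (\<exists>D. is_min_ved ?V (bE adj) D \<and> Inr (Max ?A) \<in> D)"
        using jA adj1al by blast
      then show ?thesis unfolding Let_def by blast
    qed
  qed
qed

end
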